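(* Let $n=2$. The map $\mathcal M:\Omega\to\mathbb R^5$, $W=(w_1,u_1,w_2,u_2,\sigma)\mapsto(M_0,\dots,M_4)^T$ with $M_j=\sum_{i=1}^2 w_i\Delta_j(u_i,\sigma)$, is injective on $\Omega=\{W\in\mathbb R^5: w_1>0,\ w_2>0,\ u_1<u_2,\ \sigma>0\}$ if and only if the kernel satisfies $\mathfrak m_4\ge 3+\frac98\mathfrak m_3^2$.
   Context: Let $\mathcal K:\mathbb R\to[0,\infty)$ be a kernel with $\mathfrak m_j:=\int_{\mathbb R}\xi^j\mathcal K(\xi)\,d\xi<\infty$ for all $j\in\mathbb N$; the kernel is assumed normalized: $\mathfrak m_0=1$, $\mathfrak m_1=0$, $\mathfrak m_2=1$. For $u\in\mathbb R$, $\sigma>0$, $\Delta_j(u,\sigma)=\int_{\mathbb R}\xi^j\frac1\sigma\mathcal K\!\left(\frac{\xi-u}{\sigma}\right)d\xi=\sum_{k=0}^j\binom jk\mathfrak m_k\sigma^ku^{j-k}$. *)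

theory Defs
  imports "HOL-Analysis.Analysis"
begin

definition kmoment :: "(real \<Rightarrow> real) \<Rightarrow> nat \<Rightarrow> real" where
  "kmoment K j = (LINT \<xi>|lborel. \<xi> ^ j * K \<xi>)"

definition Delta :: "(real \<Rightarrow> real) \<Rightarrow> nat \<Rightarrow> real \<Rightarrow> real \<Rightarrow> real" where
  "Delta K j u \<sigma> = (\<Sum>k\<le>j. real (j choose k) * kmoment K k * \<sigma> ^ k * u ^ (j - k))"

definition Mmap :: "(real \<Rightarrow> real) \<Rightarrow> real \<times> real \<times> real \<times> real \<times> real \<Rightarrow> real list" where
  "Mmap K W = (case W of (w1, u1, w2, u2, \<sigma>) \<Rightarrow>
     map (\<lambda>j. w1 * Delta K j u1 \<sigma> + w2 * Delta K j u2 \<sigma>) [0..<5])"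

definition Omega :: "(real \<times> real \<times> real \<times> real \<times> real) set" where
  "Omega = {(w1, u1, w2, u2, \<sigma>). w1 > 0 \<and> w2 > 0 \<and> u1 < u2 \<and> \<sigma> > 0}"

end

theory Submission
  imports Defs
begin


lemma Delta_expl:
  assumes "kmoment K 0 = 1" "kmoment K 1 = 0" "kmoment K 2 = 1"
  shows "Delta K 0 u s = 1" "Delta K 1 u s = u" "Delta K 2 u s = u^2 + s^2"
    "Delta K 3 u s = u^3 + 3*u * s^2 + kmoment K 3  * s^3"
    "Delta K 4 u s = u^4 + 6*u^2 * s^2 + 4*kmoment K 3  * s^3 * u + kmoment K 4  * s^4"
  using assms by (simp_all add: Delta_def numeral_eq_Suc binomial_eq_0 algebra_simps)

definition Mform :: "real \<Rightarrow> real \<Rightarrow> real \<Rightarrow> real \<Rightarrow> real \<Rightarrow> real list" where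
  "Mform m \<mu> k2 k3 k4 = [m, m*\<mu>, m*(\<mu>^2+k2), m*(\<mu>^3+3*\<mu>*k2+k3),
      m*(\<mu>^4+6*\<mu>^2*k2+4*\<mu>*k3+k4+3*k2^2)]"

lemma Mform_inj:
  assumes "Mform m \<mu> k2 k3 k4 = Mform m' \<mu>' k2' k3' k4'" "m \<noteq> 0"
  shows "m = m' \<and> \<mu> = \<mu>' \<and> k2 = k2' \<and> k3 = k3' \<and> k4 = k4'"
proof -
  from assms have e: "m = m'" "m*\<mu> = m'*\<mu>'" "m*(\<mu>^2+k2) = m'*(\<mu>'^2+k2')"
    "m*(\<mu>^3+3*\<mu>*k2+k3) = m'*(\<mu>'^3+3*\<mu>'*k2'+k3')"
    "m*(\<mu>^4+6*\<mu>^2*k2+4*\<mu>*k3+k4+3*k2^2) = m'*(\<mu>'^4+6*\<mu>'^2*k2'+4*\<mu>'*k3'+k4'+3*k2'^2)"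
    by (auto simp: Mform_def)
  have 1: "\<mu> = \<mu>'" using e assms(2) by simp
  have 2: "k2 = k2'" using e assms(2) 1 by simp
  have 3: "k3 = k3'" using e assms(2) 1 2 by simp
  have 4: "k4 = k4'" using e assms(2) 1 2 3 by simp
  show ?thesis using e 1 2 3 4 by simp
qed

definition mu :: "real \<Rightarrow> real \<Rightarrow> real \<Rightarrow> real \<Rightarrow> real" where "mu w1 u1 w2 u2 = (w1*u1+w2*u2)/(w1+w2)"
definition vv :: "real \<Rightarrow> real \<Rightarrow> real \<Rightarrow> real \<Rightarrow> real" where "vv w1 u1 w2 u2 = w1*w2*(u2-u1)^2/(w1+w2)^2"
definition cc :: "real \<Rightarrow> real \<Rightarrow> real \<Rightarrow> real \<Rightarrow> real" where "cc w1 u1 w2 u2 = w1*w2*(w1-w2)*(u2-u1)^3/(w1+w2)^3"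
definition ee :: "real \<Rightarrow> real \<Rightarrow> real \<Rightarrow> real \<Rightarrow> real" where "ee w1 u1 w2 u2 = w1*w2*((w1+w2)^2-6*w1*w2)*(u2-u1)^4/(w1+w2)^4"

lemma map5: "map f [0..<5] = [f 0, f 1, f 2, f 3, f 4]"
  by (simp add: upt_rec numeral_eq_Suc)

lemma L1core:
  fixes m w1 w2 \<mu> d z a b :: real
  assumes "m = w1 + w2" "m \<noteq> 0"
    and x1_def: "x1 = \<mu> - w2/m*d" and x2_def: "x2 = \<mu> + w1/m*d"
  shows "w1 + w2 = m"
   "w1*x1 + w2*x2 = m*\<mu>"
   "w1*(x1^2+z^2) + w2*(x2^2+z^2) = m*(\<mu>^2 + (w1*w2*d^2/m^2 + z^2))"
   "w1*(x1^3 + 3*x1*z^2 + a*z^3) + w2*(x2^3 + 3*x2*z^2 + a*z^3) =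
     m*(\<mu>^3 + 3*\<mu>*(w1*w2*d^2/m^2 + z^2) + (w1*w2*(w1-w2)*d^3/m^3 + a*z^3))"
   "w1*(x1^4 + 6*x1^2*z^2 + 4*a*z^3*x1 + b*z^4) + w2*(x2^4 + 6*x2^2*z^2 + 4*a*z^3*x2 + b*z^4) =
     m*(\<mu>^4 + 6*\<mu>^2*(w1*w2*d^2/m^2 + z^2) + 4*\<mu>*(w1*w2*(w1-w2)*d^3/m^3 + a*z^3)
      + (w1*w2*(m^2-6*w1*w2)*d^4/m^4 + (b-3)*z^4) + 3*(w1*w2*d^2/m^2 + z^2)^2)"
proof -
  have w2: "w2 = m - w1" using assms by simp
  show "w1 + w2 = m" using assms by simp
  show "w1*x1 + w2*x2 = m*\<mu>" using assms(2) unfolding x1_def x2_def w2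
    by (simp add: field_simps; algebra)
  show "w1*(x1^2+z^2) + w2*(x2^2+z^2) = m*(\<mu>^2 + (w1*w2*d^2/m^2 + z^2))"
    using assms(2) unfolding x1_def x2_def w2
    by (simp add: field_simps; algebra)
  show "w1*(x1^3 + 3*x1*z^2 + a*z^3) + w2*(x2^3 + 3*x2*z^2 + a*z^3) =
     m*(\<mu>^3 + 3*\<mu>*(w1*w2*d^2/m^2 + z^2) + (w1*w2*(w1-w2)*d^3/m^3 + a*z^3))"
    using assms(2) unfolding x1_def x2_def w2
    by (simp add: field_simps; algebra)
  show "w1*(x1^4 + 6*x1^2*z^2 + 4*a*z^3*x1 + b*z^4) + w2*(x2^4 + 6*x2^2*z^2 + 4*a*z^3*x2 + b*z^4) =
     m*(\<mu>^4 + 6*\<mu>^2*(w1*w2*d^2/m^2 + z^2) + 4*\<mu>*(w1*w2*(w1-w2)*d^3/m^3 + a*z^3)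
      + (w1*w2*(m^2-6*w1*w2)*d^4/m^4 + (b-3)*z^4) + 3*(w1*w2*d^2/m^2 + z^2)^2)"
    using assms(2) unfolding x1_def x2_def w2
    by (simp add: field_simps; algebra)
qed

lemma L1:
  assumes "kmoment K 0 = 1" "kmoment K 1 = 0" "kmoment K 2 = 1" "w1 + w2 \<noteq> 0"
  shows "Mmap K (w1,u1,w2,u2,z) = Mform (w1+w2) (mu w1 u1 w2 u2) (vv w1 u1 w2 u2 + z^2)
     (cc w1 u1 w2 u2 + kmoment K 3 * z^3) (ee w1 u1 w2 u2 + (kmoment K 4 - 3) * z^4)"
proof -
  define m where "m = w1 + w2"
  define \<mu> where "\<mu> = (w1*u1+w2*u2)/m"
  define d where "d = u2 - u1"
  have m0: "m \<noteq> 0" using assms m_def by simp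
  have mu: "m*\<mu> = w1*u1+w2*u2" using m0 unfolding \<mu>_def by simp
  have U1: "u1 = \<mu> - w2/m*d"
  proof -
    have "m*u1 = m*\<mu> - w2*d" using mu m_def unfolding d_def by algebra
    then show ?thesis using m0 by (simp add: field_simps)
  qed
  have U2: "u2 = \<mu> + w1/m*d"
  proof -
    have "m*u2 = m*\<mu> + w1*d" using mu m_def unfolding d_def by algebra
    then show ?thesis using m0 by (simp add: field_simps)
  qed
  note c = L1core[OF m_def m0 U1 U2]
  show ?thesis
    unfolding Mmap_def Mform_def mu_def vv_def cc_def ee_def map5 prod.case Delta_expl[OF assms(1-3)]
    by (simp add: m_def[symmetric] \<mu>_def[symmetric] d_def[symmetric] c)
qed



lemma ineq_aux:
  fixes x y :: real assumes "0 < x" "x < y"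
  shows "(x^2+x* y+y^2)^2 \<le> 9/8*(x+y)^2*(x^2+y^2)"
proof -
  have "9/8*(x+y)^2*(x^2+y^2) - (x^2+x* y+y^2)^2 = ((x+y)^2 - 4* x* y)*((x+y)^2+2* x* y)/8"
    by (simp add: field_simps; algebra)
  also have "\<dots> \<ge> 0"
  proof -
    have "0 \<le> (x-y)^2" by simp
    hence "0 \<le> (x+y)^2 - 4* x* y" by (simp add: power2_eq_square algebra_simps)
    moreover have "0 \<le> (x+y)^2+2* x* y" using assms by simp
    ultimately show ?thesis by simp
  qed
  finally show ?thesis by simp
qed

lemma key:
  fixes x y v1 v2 c1 c2 a b :: real
  assumes "0 < x" "x < y" "v1 > 0" "v2 > 0" "v1 + x^2 = v2 + y^2" "c1 + a* x^3 = c2 + a* y^3"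
    "c1^2/v1 - 2* v1^2 + (b-3)* x^4 = c2^2/v2 - 2* v2^2 + (b-3)* y^4" "b \<ge> 3 + 9/8* a^2"
  shows False
proof -
  define K where "K = v1 + x^2"
  define g1 where "g1 = - 2* v1^2 + (b-3)* x^4"
  define g2 where "g2 = - 2* v2^2 + (b-3)* y^4"
  have e1: "c1^2* v2 - c2^2* v1 = v1* v2*(g2-g1)"
  proof -
    have "c1^2/v1 - c2^2/v2 = g2 - g1" using assms(7) unfolding g1_def g2_def by simp
    moreover have "c1^2 * v2 - c2^2 * v1 = v1 * v2 * (c1^2/v1 - c2^2/v2)"
      using assms(3,4) by (simp add: field_simps)
    ultimately show ?thesis by simp
  qed
  have id: "(v1-v2)*(c1^2* v2 - c2^2* v1) = v1* v2*(c1-c2)^2 - (c1* v2 - c2* v1)^2" by algebra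
  have "(v1-v2)*(c1^2* v2 - c2^2* v1) \<le> v1* v2*(c1-c2)^2" unfolding id by simp
  then have "v1* v2*((g2-g1)*(v1-v2)) \<le> v1* v2*(c1-c2)^2" unfolding e1 by (simp add: algebra_simps)
  then have A: "(g2-g1)*(v1-v2) \<le> (c1-c2)^2" using assms(3,4) by simp
  have v1: "v1 = K - x^2" and v2: "v2 = K - y^2" using assms(5) K_def by auto
  have c12: "c1 - c2 = a*(y^3-x^3)" using assms(6) by (simp add: algebra_simps)
  have A2: "(y-x)^2*((x+y)^2*(4* K-(5-b)*(x^2+y^2))) \<le> (y-x)^2*(a^2*(x^2+x* y+y^2)^2)"
  proof -
    have "(g2-g1)*(v1-v2) = (y-x)^2*((x+y)^2*(4* K-(5-b)*(x^2+y^2)))"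
      unfolding g1_def g2_def v1 v2 by algebra
    moreover have "(c1-c2)^2 = (y-x)^2*(a^2*(x^2+x* y+y^2)^2)" unfolding c12 by algebra
    ultimately show ?thesis using A by simp
  qed
  have yx: "(y-x)^2 > 0" using assms by simp
  have B: "(x+y)^2*(4* K-(5-b)*(x^2+y^2)) \<le> a^2*(x^2+x* y+y^2)^2"
    using A2 yx by (simp add: mult_le_cancel_left_pos)
  have S: "x^2+y^2 < 2* K"
  proof -
    have "y^2 < K" using v2 assms(4) by simp
    moreover have "x^2 < y^2" using assms(1,2) by (simp add: power_strict_mono)
    ultimately show ?thesis by simp
  qed
  have xy: "(x+y)^2 > 0" using assms by simp
  have C: "4* K-(5-b)*(x^2+y^2) \<ge> 2*(2* K-(x^2+y^2)) + 9/8* a^2*(x^2+y^2)"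
  proof -
    have "(b-3)*(x^2+y^2) \<ge> 9/8* a^2*(x^2+y^2)"
      using assms(8) by (intro mult_right_mono) auto
    then show ?thesis by (simp add: algebra_simps)
  qed
  have "a^2*(x^2+x* y+y^2)^2 \<le> a^2*(9/8*(x+y)^2*(x^2+y^2))"
    using ineq_aux[OF assms(1,2)] by (rule mult_left_mono) simp
  also have "\<dots> < (x+y)^2*(2*(2* K-(x^2+y^2))) + a^2*(9/8*(x+y)^2*(x^2+y^2))"
    using xy S by simp
  also have "\<dots> = (x+y)^2*(2*(2* K-(x^2+y^2)) + 9/8* a^2*(x^2+y^2))"
    by (simp add: field_simps)
  also have "\<dots> \<le> (x+y)^2*(4* K-(5-b)*(x^2+y^2))"
    using C xy by (simp add: mult_le_cancel_left_pos)
  finally show False using B by simp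
qed



lemma vv_pos: "w1 > 0 \<Longrightarrow> w2 > 0 \<Longrightarrow> u1 < u2 \<Longrightarrow> vv w1 u1 w2 u2 > 0"
  unfolding vv_def by simp

lemma ee_rel:
  assumes "w1 > 0" "w2 > 0" "u1 < u2"
  shows "ee w1 u1 w2 u2 = (cc w1 u1 w2 u2)^2 / vv w1 u1 w2 u2 - 2 * (vv w1 u1 w2 u2)^2"
proof -
  have "u2 - u1 \<noteq> 0" "w1 + w2 \<noteq> 0" using assms by auto
  then show ?thesis using assms unfolding ee_def cc_def vv_def
    by (simp add: field_simps; algebra)
qed

definition Rf :: "real \<Rightarrow> real \<Rightarrow> real" where "Rf v c = sqrt (c^2 + 4 * v^3)"

lemma recover:
  assumes "w1 > 0" "w2 > 0" "u1 < u2"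
  defines "m \<equiv> w1 + w2" and "v \<equiv> vv w1 u1 w2 u2" and "c \<equiv> cc w1 u1 w2 u2"
  shows "w1 = m * (1 + c / Rf v c) / 2" "w2 = m * (1 - c / Rf v c) / 2"
    "u1 = mu w1 u1 w2 u2 - w2 / m * (Rf v c / v)" "u2 = mu w1 u1 w2 u2 + w1 / m * (Rf v c / v)"
proof -
  define d where "d = u2 - u1"
  have d0: "d > 0" and m0: "m > 0" using assms d_def by auto
  have R: "Rf v c = w1 * w2 * d^3 / m^2"
  proof -
    have "c^2 + 4 * v^3 = (w1 * w2 * d^3 / m^2)^2"
      unfolding c_def v_def cc_def vv_def d_def[symmetric] m_def[symmetric] using m0
      by (simp add: field_simps; unfold m_def; algebra)
    moreover have "w1 * w2 * d^3 / m^2 \<ge> 0" using assms d0 m0 by simp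
    ultimately show ?thesis unfolding Rf_def by (metis abs_of_nonneg real_sqrt_abs)
  qed
  have vp: "v > 0" unfolding v_def using assms(1-3) by (rule vv_pos)
  have Rdv: "Rf v c = d * v" unfolding R unfolding v_def vv_def d_def[symmetric] m_def[symmetric]
    by (simp add: power2_eq_square power3_eq_cube)
  have dd: "Rf v c / v = d" unfolding Rdv using vp by simp
  have Rp: "Rf v c > 0" unfolding Rdv using vp d0 by simp
  have cRc: "c = (w1 - w2) / m * Rf v c" unfolding R unfolding c_def cc_def d_def[symmetric] m_def[symmetric]
    by (simp add: power2_eq_square power3_eq_cube mult_ac)
  have cR: "c / Rf v c = (w1 - w2) / m" using Rp by (subst cRc) simp
  show "w1 = m * (1 + c / Rf v c) / 2" "w2 = m * (1 - c / Rf v c) / 2"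
    unfolding cR using m0 by (simp_all add: field_simps m_def)
  show "u1 = mu w1 u1 w2 u2 - w2 / m * (Rf v c / v)" "u2 = mu w1 u1 w2 u2 + w1 / m * (Rf v c / v)"
  proof -
    have "(w1*u1+w2*u2)/m - w2/m*(u2-u1) = (w1+w2)*u1/m" "(w1*u1+w2*u2)/m + w1/m*(u2-u1) = (w1+w2)*u2/m"
      using m0 by (simp_all add: field_simps)
    then show "u1 = mu w1 u1 w2 u2 - w2 / m * (Rf v c / v)" "u2 = mu w1 u1 w2 u2 + w1 / m * (Rf v c / v)"
      unfolding dd mu_def m_def[symmetric] d_def using m0 by (simp_all add: m_def)
  qed
qed

lemma Wof:
  fixes v c :: real
  assumes v0: "v > 0"
  defines "R \<equiv> Rf v c"
  defines "p \<equiv> (1 + c/R)/2" and "q \<equiv> (1 - c/R)/2" and "d \<equiv> R / v"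
  shows "p > 0" "q > 0" "- q * d < p * d" "p + q = 1" "mu p (- q * d) q (p * d) = 0"
    "vv p (- q * d) q (p * d) = v" "cc p (- q * d) q (p * d) = c"
proof -
  have "0 < v^3" using v0 by simp
  hence nn: "0 \<le> c^2 + 4 * v^3" using zero_le_power2[of c] by linarith
  hence R2: "R^2 = c^2 + 4 * v^3" unfolding R_def Rf_def by simp
  have R0: "R \<ge> 0" unfolding R_def Rf_def using nn by simp
  have "\<bar>c\<bar>^2 < R^2" unfolding R2 using v0 by simp
  hence cR: "\<bar>c\<bar> < R" using R0 by (rule power_less_imp_less_base)
  hence Rp: "R > 0" by simp
  have cR1: "c/R < 1" "c/R > -1" using cR Rp by (auto simp: field_simps abs_less_iff)
  show "p > 0" "q > 0" using cR1 unfolding p_def q_def by auto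
  have dp: "d > 0" unfolding d_def using Rp v0 by simp
  show "- q * d < p * d" using mult_pos_pos[OF \<open>p > 0\<close> dp] mult_pos_pos[OF \<open>q > 0\<close> dp] by linarith
  show pq: "p + q = 1" unfolding p_def q_def by (simp add: field_simps)
  show "mu p (- q * d) q (p * d) = 0" unfolding mu_def by (simp add: algebra_simps)
  have pq2: "p * q = v^3 / R^2" unfolding p_def q_def using Rp R2
    by (simp add: field_simps power2_eq_square power3_eq_cube; algebra)
  have e: "p * d - (- q * d) = d"
  proof -
    have "p * d - (- q * d) = (p + q) * d" by (simp add: algebra_simps)
    then show ?thesis using pq by simp
  qed
  have Rn: "R \<noteq> 0" "v \<noteq> 0" using Rp v0 by auto
  have "vv p (- q * d) q (p * d) = (p * q) * d^2" unfolding vv_def pq e by simp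
  also have "\<dots> = v^3 / R^2 * (R^2 / v^2)" unfolding pq2 d_def by (simp add: power_divide)
  also have "\<dots> = v" using Rn by (simp add: field_simps power2_eq_square power3_eq_cube)
  finally show "vv p (- q * d) q (p * d) = v" .
  have pmq: "p - q = c / R" unfolding p_def q_def by (simp add: field_simps)
  have "cc p (- q * d) q (p * d) = (p * q) * (p - q) * d^3" unfolding cc_def pq e by simp
  also have "\<dots> = v^3 / R^2 * (c / R) * (R^3 / v^3)" unfolding pq2 pmq d_def by (simp add: power_divide)
  also have "\<dots> = c" using Rn by (simp add: field_simps power2_eq_square power3_eq_cube)
  finally show "cc p (- q * d) q (p * d) = c" .
qed



lemma exists_sig:
  fixes a b :: real
  assumes "b < 3 + 9/8*a^2"
  shows "\<exists>x y. 0 < x \<and> x < y \<and> y < 1 \<and> (x+y)^2*(4-(5-b)*(x^2+y^2)) < a^2*(x^2+x*y+y^2)^2"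
proof -
  define \<phi> where "\<phi> = (\<lambda>e::real. (2-3*e)^2*(4-(5-b)*((1-2*e)^2+(1-e)^2))
      - a^2*((1-2*e)^2+(1-2*e)*(1-e)+(1-e)^2)^2)"
  have "(\<phi> \<longlongrightarrow> \<phi> 0) (at_right 0)" unfolding \<phi>_def by (intro tendsto_intros)
  moreover have "\<phi> 0 < 0" unfolding \<phi>_def using assms by simp
  ultimately have "\<forall>\<^sub>F e in at_right 0. \<phi> e < 0" by (rule order_tendstoD(2))
  then have "\<exists>b>0. \<forall>y>0. y < b \<longrightarrow> \<phi> y < 0"
    using eventually_at_right[of "0::real" 1] by simp
  then obtain b0 where b0: "b0 > 0" "\<And>e. e > 0 \<Longrightarrow> e < b0 \<Longrightarrow> \<phi> e < 0"
    by auto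
  define e where "e = min (b0/2) (1/4)"
  have e: "e > 0" "e < b0" "e \<le> 1/4" unfolding e_def using b0 by auto
  have "\<phi> e < 0" using b0 e by auto
  then have "((1-2*e)+(1-e))^2*(4-(5-b)*((1-2*e)^2+(1-e)^2)) < a^2*((1-2*e)^2+(1-2*e)*(1-e)+(1-e)^2)^2"
    unfolding \<phi>_def by simp
  moreover have "0 < 1-2*e" "1-2*e < 1-e" "1-e < 1" using e by auto
  ultimately show ?thesis by blast
qed



lemma inj_dir:
  fixes K :: "real \<Rightarrow> real"
  assumes h: "kmoment K 0 = 1" "kmoment K 1 = 0" "kmoment K 2 = 1"
    and cond: "kmoment K 4 \<ge> 3 + 9 / 8 * (kmoment K 3)\<^sup>2"
  shows "inj_on (Mmap K) Omega"
proof (rule inj_onI)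
  fix W W' assume WO: "W \<in> Omega" "W' \<in> Omega" and eq: "Mmap K W = Mmap K W'"
  obtain w1 u1 w2 u2 z where W: "W = (w1,u1,w2,u2,z)" by (cases W) auto
  obtain w1' u1' w2' u2' z' where W': "W' = (w1',u1',w2',u2',z')" by (cases W') auto
  have p: "w1 > 0" "w2 > 0" "u1 < u2" "z > 0" using WO(1) W by (auto simp: Omega_def)
  have p': "w1' > 0" "w2' > 0" "u1' < u2'" "z' > 0" using WO(2) W' by (auto simp: Omega_def)
  define a where "a = kmoment K 3"
  define b where "b = kmoment K 4"
  define v where "v = vv w1 u1 w2 u2"
  define v' where "v' = vv w1' u1' w2' u2'"
  define c where "c = cc w1 u1 w2 u2"
  define c' where "c' = cc w1' u1' w2' u2'"
  have vp: "v > 0" "v' > 0" unfolding v_def v'_def using p p' by (auto intro: vv_pos)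
  have E: "ee w1 u1 w2 u2 = c^2/v - 2* v^2" "ee w1' u1' w2' u2' = c'^2/v' - 2* v'^2"
    unfolding v_def v'_def c_def c'_def using ee_rel p p' by auto
  have "Mform (w1+w2) (mu w1 u1 w2 u2) (v + z^2) (c + a* z^3) (c^2/v - 2* v^2 + (b-3)* z^4)
      = Mform (w1'+w2') (mu w1' u1' w2' u2') (v' + z'^2) (c' + a* z'^3) (c'^2/v' - 2* v'^2 + (b-3)* z'^4)"
  proof -
    have "w1 + w2 \<noteq> 0" "w1' + w2' \<noteq> 0" using p p' by auto
    note X = eq[unfolded W W' L1[OF h this(1)] L1[OF h this(2)]]
    have E': "ee w1 u1 w2 u2 = (cc w1 u1 w2 u2)^2/(vv w1 u1 w2 u2) - 2 * (vv w1 u1 w2 u2)^2"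
      "ee w1' u1' w2' u2' = (cc w1' u1' w2' u2')^2/(vv w1' u1' w2' u2') - 2 * (vv w1' u1' w2' u2')^2"
      using E unfolding v_def v'_def c_def c'_def by auto
    show ?thesis using X unfolding E' v_def v'_def c_def c'_def a_def b_def .

  qed
  from Mform_inj[OF this] p have
    e1: "w1 + w2 = w1' + w2'" and e2: "mu w1 u1 w2 u2 = mu w1' u1' w2' u2'"
    and e3: "v + z^2 = v' + z'^2" and e4: "c + a* z^3 = c' + a* z'^3"
    and e5: "c^2/v - 2* v^2 + (b-3)* z^4 = c'^2/v' - 2* v'^2 + (b-3)* z'^4" by auto
  have cond': "b \<ge> 3 + 9/8* a^2" using cond unfolding a_def b_def .
  have zz: "z = z'"
  proof (rule linorder_cases[of z z'])
    assume "z < z'" then show ?thesis using key[OF p(4) _ vp e3 e4 e5 cond'] by simp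
  next
    assume "z' < z" then show ?thesis
      using key[OF p'(4) _ vp(2,1) e3[symmetric] e4[symmetric] e5[symmetric] cond'] by simp
  qed simp
  have vv: "v = v'" using e3 zz by simp
  have ccc: "c = c'" using e4 zz by simp
  note r = recover[OF p(1-3)] and r' = recover[OF p'(1-3)]
  have "w1 = w1'" "w2 = w2'" using r(1,2) r'(1,2) e1 vv ccc unfolding v_def v'_def c_def c'_def
    by metis+
  moreover have "u1 = u1'" "u2 = u2'" using r(3,4) r'(3,4) e1 e2 vv ccc \<open>w1 = w1'\<close> \<open>w2 = w2'\<close>
    unfolding v_def v'_def c_def c'_def by metis+
  ultimately show "W = W'" unfolding W W' using zz by simp
qed



lemma realize:
  fixes K :: "real \<Rightarrow> real" and v c s :: real
  assumes h: "kmoment K 0 = 1" "kmoment K 1 = 0" "kmoment K 2 = 1" and v0: "v > 0" and s0: "s > 0"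
  shows "\<exists>W \<in> Omega. snd (snd (snd (snd W))) = s \<and>
     Mmap K W = Mform 1 0 (v + s^2) (c + kmoment K 3 * s^3) (c^2/v - 2 * v^2 + (kmoment K 4 - 3) * s^4)"
proof -
  define R where "R = Rf v c"
  define p where "p = (1 + c/R)/2"
  define q where "q = (1 - c/R)/2"
  define d where "d = R / v"
  note w = Wof[OF v0, of c, folded R_def, folded p_def q_def d_def]
  define W where "W = (p, - q * d, q, p * d, s)"
  have "W \<in> Omega" unfolding W_def Omega_def using w s0 by auto
  moreover have "Mmap K W = Mform 1 0 (v + s^2) (c + kmoment K 3 * s^3) (c^2/v - 2 * v^2 + (kmoment K 4 - 3) * s^4)"
  proof -
    have "p + q \<noteq> 0" using w by simp
    note X = L1[OF h this, of "- q * d" "p * d" s]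
    have "ee p (- q * d) q (p * d) = c^2/v - 2 * v^2"
      using ee_rel[of p q "- q * d" "p * d"] w by simp
    then show ?thesis unfolding W_def X using w by simp
  qed
  ultimately show ?thesis by (intro bexI[where x=W]) (simp_all add: W_def)
qed

lemma noninj_dir:
  fixes K :: "real \<Rightarrow> real"
  assumes h: "kmoment K 0 = 1" "kmoment K 1 = 0" "kmoment K 2 = 1"
    and inj: "inj_on (Mmap K) Omega"
  shows "kmoment K 4 \<ge> 3 + 9 / 8 * (kmoment K 3)\<^sup>2"
proof (rule ccontr)
  define a where "a = kmoment K 3"
  define b where "b = kmoment K 4"
  assume "\<not> ?thesis"
  then have "b < 3 + 9/8 * a^2" unfolding a_def b_def by simp
  then obtain x y where xy: "0 < x" "x < y" "y < 1"
    and ineq: "(x+y)^2*(4-(5-b)*(x^2+y^2)) < a^2*(x^2+x * y+y^2)^2"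
    using exists_sig by blast
  define v1 where "v1 = 1 - x^2"
  define v2 where "v2 = 1 - y^2"
  have x2y2: "x^2 < y^2" "y^2 < 1" using xy power_strict_mono[of x y 2] power_strict_mono[of y 1 2] by auto
  then have v: "v1 > 0" "v2 > 0" "v1 - v2 > 0" unfolding v1_def v2_def by auto
  define \<alpha> where "\<alpha> = a * x^3"
  define \<beta> where "\<beta> = a * y^3"
  define g1 where "g1 = - 2 * v1^2 + (b-3) * x^4"
  define g2 where "g2 = - 2 * v2^2 + (b-3) * y^4"
  define E where "E = v1 * v2 * (g2 - g1)"
  define hm where "hm = v1 * v2 * (\<alpha> - \<beta>)^2 / (v1 - v2)"
  define k0 where "k0 = (\<beta> * v1 - \<alpha> * v2) / (v1 - v2)"
  have "(g2-g1)*(v1-v2) = (y-x)^2*((x+y)^2*(4-(5-b)*(x^2+y^2)))"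
    unfolding g1_def g2_def v1_def v2_def by algebra
  moreover have "(\<alpha> - \<beta>)^2 = (y-x)^2*(a^2*(x^2+x * y+y^2)^2)" unfolding \<alpha>_def \<beta>_def by algebra
  moreover have "(y-x)^2 > 0" using xy by simp
  ultimately have lt: "(g2-g1)*(v1-v2) < (\<alpha> - \<beta>)^2" using ineq by simp
  have hmE: "hm - E = v1 * v2 * ((\<alpha> - \<beta>)^2 - (g2-g1)*(v1-v2)) / (v1 - v2)"
    unfolding hm_def E_def using v by (simp add: field_simps)
  have "hm - E > 0" unfolding hmE using v lt by simp
  define t where "t = sqrt ((hm - E) / (v1 - v2))"
  have t2: "t^2 = (hm - E) / (v1 - v2)" unfolding t_def using \<open>hm - E > 0\<close> v by simp
  define k where "k = k0 + t"
  define c1 where "c1 = k - \<alpha>"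
  define c2 where "c2 = k - \<beta>"
  have quad: "c1^2 * v2 - c2^2 * v1 = hm - (v1 - v2) * t^2"
    unfolding c1_def c2_def k_def k0_def hm_def using v by (simp add: field_simps; algebra)
  have "c1^2 * v2 - c2^2 * v1 = E" unfolding quad t2 using v by simp
  then have Feq: "c1^2/v1 - 2 * v1^2 + (b-3) * x^4 = c2^2/v2 - 2 * v2^2 + (b-3) * y^4"
    unfolding E_def g1_def g2_def using v by (simp add: field_simps; algebra)
  obtain W1 where W1: "W1 \<in> Omega" "snd (snd (snd (snd W1))) = x"
    "Mmap K W1 = Mform 1 0 (v1 + x^2) (c1 + a * x^3) (c1^2/v1 - 2 * v1^2 + (b - 3) * x^4)"
    using realize[OF h v(1) xy(1), of c1] unfolding a_def b_def by blast
  obtain W2 where W2: "W2 \<in> Omega" "snd (snd (snd (snd W2))) = y"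
    "Mmap K W2 = Mform 1 0 (v2 + y^2) (c2 + a * y^3) (c2^2/v2 - 2 * v2^2 + (b - 3) * y^4)"
    using realize[OF h v(2) order.strict_trans[OF xy(1,2)], of c2] unfolding a_def b_def by blast
  have "v1 + x^2 = v2 + y^2" unfolding v1_def v2_def by simp
  moreover have "c1 + a * x^3 = c2 + a * y^3" unfolding c1_def c2_def \<alpha>_def \<beta>_def by simp
  ultimately have "Mmap K W1 = Mmap K W2" unfolding W1(3) W2(3) Feq by simp
  then have "W1 = W2" using inj_onD[OF inj _ W1(1) W2(1)] by blast
  then show False using W1(2) W2(2) xy by simp
qed


theorem corollary2p6:
  fixes K :: "real \<Rightarrow> real"
  assumes "\<And>\<xi>. K \<xi> \<ge> 0"
    and "\<And>j. integrable lborel (\<lambda>\<xi>. \<xi> ^ j * K \<xi>)"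
    and "kmoment K 0 = 1" and "kmoment K 1 = 0" and "kmoment K 2 = 1"
  shows "inj_on (Mmap K) Omega \<longleftrightarrow> kmoment K 4 \<ge> 3 + 9 / 8 * (kmoment K 3)\<^sup>2"
  using inj_dir[OF assms(3-5)] noninj_dir[OF assms(3-5)] by blast

end
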